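(* Let $W\in\mathbb{R}^{m\times n}$ have columns $W_1,\dots,W_n\in\mathbb{R}^m$, all nonzero, and let $F:=WW^\top$. For each $i$ define the fractional dimensionality $$D_i:=\frac{\|W_i\|^4}{\sum_{j=1}^n (W_i^\top W_j)^2},$$ and the spectral measure $\mu_i:=\sum_{e:\lambda_e>0} p_{i,e}\,\delta_{\lambda_e}$, where $\lambda_e$ runs over the distinct positive eigenvalues of $F$, $P_e$ is the orthogonal projector onto the $\lambda_e$-eigenspace of $F$, and $p_{i,e}:=\|P_eW_i\|^2/\|W_i\|^2$. Assume the capacity bound is saturated: $\sum_{i=1}^n D_i=\operatorname{rank}(W)=m$. Then for every feature $i$ the spectral measure $\mu_i$ is a single Dirac mass $\delta_{\lambda_k}$ at some eigenvalue $\lambda_k>0$ of $F$; equivalently, $FW_i=\lambda_kW_i$.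
   Context: $\delta_\lambda$ denotes the Dirac (point) probability measure at $\lambda$. For nonzero columns, the weights $p_{i,e}$ are nonnegative and sum to $1$, so $\mu_i$ is a finitely supported probability measure on $(0,\infty)$. *)

theory Defs
  imports "HOL-Probability.Probability"
begin

text \<open>W is an m x n real matrix (rows indexed by 'm, columns by 'n);
  the i-th column is column i W; F = W W^T.\<close>

definition gram_F :: "real^'n^'m \<Rightarrow> real^'m^'m" where
  "gram_F W = W ** transpose W"

definition frac_dim :: "real^'n^'m \<Rightarrow> 'n \<Rightarrow> real" where
  "frac_dim W i = norm (column i W) ^ 4 / (\<Sum>j\<in>UNIV. (column i W \<bullet> column j W)^2)"

definition is_eigenvalue :: "real^'m^'m \<Rightarrow> real \<Rightarrow> bool" where
  "is_eigenvalue F l \<longleftrightarrow> (\<exists>v. v \<noteq> 0 \<and> F *v v = l *\<^sub>R v)"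

definition eigenspace :: "real^'m^'m \<Rightarrow> real \<Rightarrow> (real^'m) set" where
  "eigenspace F l = {v. F *v v = l *\<^sub>R v}"

definition orth_proj :: "(real^'m) set \<Rightarrow> real^'m \<Rightarrow> real^'m" where
  "orth_proj S x = (THE y. y \<in> S \<and> (\<forall>z\<in>S. orthogonal (x - y) z))"

definition spectral_weight :: "real^'n^'m \<Rightarrow> 'n \<Rightarrow> real \<Rightarrow> real" where
  "spectral_weight W i l =
     norm (orth_proj (eigenspace (gram_F W) l) (column i W)) ^ 2 / norm (column i W) ^ 2"

text \<open>mu_i = sum over distinct positive eigenvalues l of F of p_{i,l} delta_l,
  as a measure on the reals (all subsets measurable).\<close>
definition spectral_measure :: "real^'n^'m \<Rightarrow> 'n \<Rightarrow> real measure" where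
  "spectral_measure W i = density (count_space UNIV)
     (\<lambda>l. if l > 0 \<and> is_eigenvalue (gram_F W) l then ennreal (spectral_weight W i l) else 0)"

end

theory Submission
  imports Defs
begin

lemma adj: fixes A :: "real^'n^'m" shows "(A *v x) \<bullet> y = x \<bullet> (transpose A *v y)"
  by (metis dot_lmul_matrix inner_commute transpose_transpose vector_transpose_matrix)

lemma Tcol: fixes W :: "real^'n^'m" shows "(transpose W *v a) $ j = column j W \<bullet> a"
  by (simp add: matrix_vector_mult_def transpose_def column_def inner_vec_def mult.commute)

lemma denom: fixes W :: "real^'n^'m"
  shows "(\<Sum>j\<in>UNIV. (column i W \<bullet> column j W)^2) = (transpose W *v column i W) \<bullet> (transpose W *v column i W)"
proof -
  have "(transpose W *v column i W) \<bullet> (transpose W *v column i W) = (\<Sum>j\<in>UNIV. (transpose W *v column i W)$j * (transpose W *v column i W)$j)"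
    by (simp only: inner_vec_def inner_real_def)
  moreover have "\<And>j. (transpose W *v column i W)$j = column i W \<bullet> column j W"
    by (simp only: Tcol inner_commute)
  ultimately show ?thesis by (simp only: power2_eq_square)
qed

lemma trace_sum: fixes W :: "real^'n^'m" and G :: "real^'m^'m"
  assumes "G ** (W ** transpose W) = mat 1"
  shows "(\<Sum>i\<in>UNIV. (G *v column i W) \<bullet> column i W) = real CARD('m)"
proof -
  have "(\<Sum>i\<in>UNIV. (G *v column i W) \<bullet> column i W)
     = (\<Sum>i\<in>UNIV. \<Sum>k\<in>UNIV. \<Sum>l\<in>UNIV. G$k$l * W$l$i * W$k$i)"
    by (simp add: inner_vec_def matrix_vector_mult_def column_def sum_distrib_right)
  also have "\<dots> = (\<Sum>k\<in>UNIV. \<Sum>i\<in>UNIV. \<Sum>l\<in>UNIV. G$k$l * W$l$i * W$k$i)"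
    by (rule sum.swap)
  also have "\<dots> = (\<Sum>k\<in>UNIV. \<Sum>l\<in>UNIV. \<Sum>i\<in>UNIV. G$k$l * W$l$i * W$k$i)"
    by (rule sum.cong[OF refl], rule sum.swap)
  also have "\<dots> = (\<Sum>k\<in>UNIV. (G ** (W ** transpose W))$k$k)"
    by (simp add: matrix_matrix_mult_def transpose_def sum_distrib_left mult.assoc)
  also have "\<dots> = real CARD('m)" using assms by (simp add: mat_def)
  finally show ?thesis .
qed

lemma orth_proj_eq:
  assumes sub: "\<And>y z. y \<in> S \<Longrightarrow> z \<in> S \<Longrightarrow> y - z \<in> S"
    and yS: "y \<in> S" and orth: "\<And>z. z \<in> S \<Longrightarrow> (x - y) \<bullet> z = 0"
  shows "orth_proj S x = y"
  unfolding orth_proj_def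
proof (rule the_equality)
  show "y \<in> S \<and> (\<forall>z\<in>S. orthogonal (x - y) z)" using yS orth by (simp add: orthogonal_def)
next
  fix y' assume h: "y' \<in> S \<and> (\<forall>z\<in>S. orthogonal (x - y') z)"
  have d: "y' - y \<in> S" using sub h yS by blast
  have "(x - y) \<bullet> (y' - y) = 0" using orth d by blast
  moreover have "(x - y') \<bullet> (y' - y) = 0" using h d by (simp add: orthogonal_def)
  ultimately have "(y' - y) \<bullet> (y' - y) = 0"
    by (simp add: inner_diff_left inner_diff_right algebra_simps)
  then show "y' = y" by simp
qed

lemma eig_proj:
  fixes F :: "real^'m^'m"
  assumes symF: "\<And>x y. (F *v x) \<bullet> y = x \<bullet> (F *v y)"
    and ev: "F *v a = l *\<^sub>R a"
  shows "orth_proj (eigenspace F l') a = (if l' = l then a else 0)"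
proof -
  have sub: "\<And>y z. y \<in> eigenspace F l' \<Longrightarrow> z \<in> eigenspace F l' \<Longrightarrow> y - z \<in> eigenspace F l'"
    by (simp add: eigenspace_def matrix_vector_mult_diff_distrib scaleR_diff_right)
  show ?thesis
  proof (cases "l' = l")
    case True
    have "orth_proj (eigenspace F l') a = a" using ev True by (intro orth_proj_eq[OF sub]) (auto simp: eigenspace_def)
    then show ?thesis using True by simp
  next
    case False
    have "(a - 0) \<bullet> z = 0" if "z \<in> eigenspace F l'" for z
    proof -
      have "l * (a \<bullet> z) = (F *v a) \<bullet> z" using ev by simp
      also have "\<dots> = a \<bullet> (F *v z)" by (rule symF)
      also have "\<dots> = l' * (a \<bullet> z)" using that by (simp add: eigenspace_def)
      finally show ?thesis using False by simp
    qed
    then have "orth_proj (eigenspace F l') a = 0" by (intro orth_proj_eq[OF sub]) (auto simp: eigenspace_def)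
    then show ?thesis using False by simp
  qed
qed

theorem theorem1:
  fixes W :: "real^'n^'m"
  assumes nonzero: "\<And>i. column i W \<noteq> 0"
    and saturated: "(\<Sum>i\<in>UNIV. frac_dim W i) = real (rank W)"
    and full_rank: "rank W = CARD('m)"
  shows "\<forall>i. \<exists>l. l > 0 \<and> is_eigenvalue (gram_F W) l
            \<and> spectral_measure W i = return (count_space UNIV) l
            \<and> gram_F W *v column i W = l *\<^sub>R column i W"
proof
  fix i
  define T where "T = transpose W"
  define F where "F = gram_F W"
  have FWT: "F = W ** T" unfolding F_def T_def gram_F_def ..
  have injT: "inj ((*v) T)" unfolding T_def
    using full_rank rank_transpose full_rank_injective by metis
  have T0: "T *v v = 0 \<Longrightarrow> v = 0" for v
    using injT by (metis injD matrix_vector_mult_0_right)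
  have Fv: "F *v v = W *v (T *v v)" for v by (simp add: FWT matrix_vector_mul_assoc)
  have adjT: "(T *v x) \<bullet> y = x \<bullet> (W *v y)" for x y
    using adj[of T x y] by (simp add: T_def)
  have quad: "v \<bullet> (F *v v) = (T *v v) \<bullet> (T *v v)" for v
    using adjT[of v "T *v v"] by (simp add: Fv inner_commute)
  have trF: "transpose F = F" by (simp add: FWT T_def matrix_transpose_mul)
  have symF: "(F *v x) \<bullet> y = x \<bullet> (F *v y)" for x y
    using adj[of F x y] trF by simp
  have F0: "F *v v = 0 \<Longrightarrow> v = 0" for v
    using quad[of v] T0[of v] by simp
  have injF: "inj ((*v) F)"
  proof (rule injI)
    fix x y assume "F *v x = F *v y"
    then have "F *v (x - y) = 0" by (simp add: matrix_vector_mult_diff_distrib)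
    then show "x = y" using F0[of "x - y"] by simp
  qed
  obtain G where GF: "G ** F = mat 1" using injF matrix_left_invertible_injective by blast
  have FG: "F ** G = mat 1" using GF matrix_left_right_inverse by blast
  have FGv: "F *v (G *v v) = v" for v using FG by (simp add: matrix_vector_mul_assoc)
  define a where "a = (\<lambda>j. column j W)"
  define p where "p = (\<lambda>j. (T *v a j) \<bullet> (T *v a j))"
  define s where "s = (\<lambda>j. a j \<bullet> a j)"
  define q where "q = (\<lambda>j. (G *v a j) \<bullet> a j)"
  have ppos: "p j > 0" for j
  proof -
    have "T *v a j \<noteq> 0" using T0 nonzero by (auto simp: a_def)
    then show ?thesis by (simp add: p_def)
  qed
  have spos: "s j > 0" for j using nonzero by (simp add: s_def a_def)
  have D: "frac_dim W j = (s j)^2 / p j" for j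
  proof -
    have "norm (a j) ^ 4 = (s j)^2"
      by (simp add: s_def power2_norm_eq_inner[symmetric] power_mult[symmetric])
    then show ?thesis unfolding frac_dim_def denom p_def T_def a_def by simp
  qed
  define u where "u = (\<lambda>j. T *v (G *v a j))"
  define v where "v = (\<lambda>j. T *v a j)"
  have uv: "u j \<bullet> v j = s j" for j
  proof -
    have "u j \<bullet> v j = (G *v a j) \<bullet> (F *v a j)" by (simp add: u_def v_def adjT Fv)
    also have "\<dots> = s j" using symF[of "G *v a j" "a j", symmetric] by (simp add: FGv s_def)
    finally show ?thesis .
  qed
  have uu: "u j \<bullet> u j = q j" for j
    by (simp add: u_def adjT Fv[symmetric] FGv q_def inner_commute)
  have vv: "v j \<bullet> v j = p j" for j by (simp add: v_def p_def)
  have le: "frac_dim W j \<le> q j" for j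
  proof -
    have "(s j)^2 \<le> q j * p j" using Cauchy_Schwarz_ineq[of "u j" "v j"] uv uu vv by simp
    then show ?thesis using ppos[of j] by (simp add: D pos_divide_le_eq)
  qed
  have sumq: "(\<Sum>j\<in>UNIV. q j) = real CARD('m)"
    using trace_sum[of G W] GF by (simp add: q_def a_def FWT T_def)
  have "(\<Sum>j\<in>UNIV. q j - frac_dim W j) = 0"
    using sumq saturated full_rank by (simp add: sum_subtractf)
  then have "q i - frac_dim W i = 0"
    using le by (subst (asm) sum_nonneg_eq_0_iff) auto
  then have eq: "(s i)^2 = q i * p i" using ppos[of i] by (simp add: D field_simps)
  define t where "t = s i / p i"
  have "(u i - t *\<^sub>R v i) \<bullet> (u i - t *\<^sub>R v i) = q i - 2 * t * s i + t^2 * p i"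
    by (simp add: inner_diff_left inner_diff_right uu uv vv inner_commute power2_eq_square algebra_simps)
  also have "\<dots> = 0" using eq ppos[of i] by (simp add: t_def field_simps power2_eq_square)
  finally have "u i = t *\<^sub>R v i" by simp
  then have "T *v (G *v a i - t *\<^sub>R a i) = 0"
    by (simp add: u_def v_def matrix_vector_mult_diff_distrib matrix_vector_mult_scaleR)
  then have Ga: "G *v a i = t *\<^sub>R a i" using T0[of "G *v a i - t *\<^sub>R a i"] by simp
  have tpos: "t > 0" using spos ppos by (simp add: t_def)
  define l where "l = p i / s i"
  have lpos: "l > 0" using spos ppos by (simp add: l_def)
  have "a i = F *v (G *v a i)" by (simp add: FGv)
  also have "\<dots> = t *\<^sub>R (F *v a i)" by (simp add: Ga matrix_vector_mult_scaleR)
  finally have "F *v a i = l *\<^sub>R a i" using tpos spos ppos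
    by (simp add: l_def t_def) (metis (no_types, lifting) scaleR_scaleR divide_self_if mult.commute
        order_less_irrefl scaleR_one times_divide_eq_left nonzero_divide_eq_eq)
  then have ev: "F *v column i W = l *\<^sub>R column i W" by (simp add: a_def)
  have iseig: "is_eigenvalue F l" using ev nonzero unfolding is_eigenvalue_def by blast
  have w: "spectral_weight W i l' = (if l' = l then 1 else 0)" for l'
    unfolding spectral_weight_def F_def[symmetric] eig_proj[OF symF ev]
    using nonzero[of i] by simp
  have "spectral_measure W i = density (count_space UNIV) (indicator {l})"
    unfolding spectral_measure_def F_def[symmetric]
    by (rule density_cong) (auto simp: w lpos iseig indicator_def)
  then show "\<exists>l>0. is_eigenvalue (gram_F W) l \<and>
            spectral_measure W i = return (count_space UNIV) l \<and>
            gram_F W *v column i W = l *\<^sub>R column i W"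
    using lpos iseig ev by (auto simp: F_def return_count_space_eq_density)
qed

end
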